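(* Let $\overrightarrow{W}$ be a Morse sequence on a simplicial complex $K$. (1) The map $\widetilde\curlywedge_p:\widehat W[p]\to\overline O[p]$ is a vector space isomorphism whose inverse is the restriction of $\curlywedge_p$ to $\overline O[p]$. (2) The map $\widetilde\curlyvee_p:\widehat W[p]\to\underline O[p]$ is a vector space isomorphism whose inverse is the restriction of $\curlyvee_p$ to $\underline O[p]$.
   Context: A simplicial complex $K$ is a finite collection of non-empty finite sets closed under taking non-empty subsets; $\dim\sigma=|\sigma|-1$, $K^{(p)}$ the set of $p$-simplices. A pair $(\sigma,\tau)$ with $\sigma\subsetneq\tau$ is a free pair for $K$ if $\tau$ is the only simplex other than $\sigma$ containing $\sigma$; $K$ is then an elementary expansion of $K\setminus\{\sigma,\tau\}$. If $\nu$ is a facet (maximal simplex) of $K$, $K$ is an elementary filling of $K\setminus\{\nu\}$. A Morse sequence on $K$ is a sequence $\langle\emptyset=K_0,\dots,K_k=K\rangle$ with each $K_i$ an elementary expansion or filling of $K_{i-1}$; simplices added by fillings are critical; for an expansion $K_i=K_{i-1}\cup\{\sigma,\tau\}$, $\sigma\subset\tau$, $\sigma$ is lower regular and $\tau$ upper regular. $\widehat W$ is the set of critical simplices. $K[p]$ is the $\mathbb{Z}_2$-vector space of subsets of $K^{(p)}$ (sum = symmetric difference, $0=\emptyset$), $\widehat W[p]=\{c\in K[p]:c\subseteq\widehat W\}$. For $\sigma\in K^{(p)}$, $\partial(\sigma)=\{\tau\in K^{(p-1)}:\tau\subset\sigma\}$, $\delta(\sigma)=\{\tau\in K^{(p+1)}:\sigma\subset\tau\}$.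 The reference map $\curlywedge$ is the unique map assigning to each $p$-simplex an element of $\widehat W[p]$, with linear extension $\curlywedge_p:K[p]\to\widehat W[p]$, such that $\curlywedge(\nu)=\{\nu\}$ for critical $\nu$ and $\curlywedge(\tau)=0=\curlywedge(\partial(\tau))$ for upper regular $\tau$ (with $\partial(\tau)$ viewed as a chain); the coreference map $\curlyvee$ (linear extension $\curlyvee_p$) is the unique such map with $\curlyvee(\nu)=\{\nu\}$ for critical $\nu$ and $\curlyvee(\sigma)=0=\curlyvee(\delta(\sigma))$ for lower regular $\sigma$. The extension and coextension maps are the linear maps $\widetilde\curlywedge_p,\widetilde\curlyvee_p:\widehat W[p]\to K[p]$ with $\widetilde\curlywedge(\kappa)=\{\nu\in K:\kappa\in\curlyvee(\nu)\}$ and $\widetilde\curlyvee(\kappa)=\{\nu\in K:\kappa\in\curlywedge(\nu)\}$ for critical $p$-simplices $\kappa$. $\overline O[p]$ and $\underline O[p]$ denote the images of $\widetilde\curlywedge_p$ and $\widetilde\curlyvee_p$ respectively (subspaces of $K[p]$). *)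

theory Defs
  imports Main
begin

definition simplicial_complex :: "'v set set \<Rightarrow> bool" where
  "simplicial_complex K \<longleftrightarrow> finite K \<and>
     (\<forall>\<sigma>\<in>K. \<sigma> \<noteq> {} \<and> finite \<sigma> \<and> (\<forall>\<tau>. \<tau> \<subseteq> \<sigma> \<and> \<tau> \<noteq> {} \<longrightarrow> \<tau> \<in> K))"

definition simplices :: "'v set set \<Rightarrow> nat \<Rightarrow> 'v set set" where
  "simplices K p = {\<sigma>\<in>K. card \<sigma> = Suc p}"

definition free_pair :: "'v set set \<Rightarrow> 'v set \<Rightarrow> 'v set \<Rightarrow> bool" where
  "free_pair K \<sigma> \<tau> \<longleftrightarrow> \<sigma> \<in> K \<and> \<tau> \<in> K \<and> \<sigma> \<subset> \<tau> \<and> (\<forall>x\<in>K. \<sigma> \<subseteq> x \<longrightarrow> x = \<sigma> \<or> x = \<tau>)"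

definition facet :: "'v set set \<Rightarrow> 'v set \<Rightarrow> bool" where
  "facet K \<nu> \<longleftrightarrow> \<nu> \<in> K \<and> \<not> (\<exists>x\<in>K. \<nu> \<subset> x)"

definition expansion_step :: "'v set set \<Rightarrow> 'v set set \<Rightarrow> 'v set \<Rightarrow> 'v set \<Rightarrow> bool" where
  "expansion_step L K \<sigma> \<tau> \<longleftrightarrow> free_pair K \<sigma> \<tau> \<and> L = K - {\<sigma>, \<tau>}"

definition filling_step :: "'v set set \<Rightarrow> 'v set set \<Rightarrow> 'v set \<Rightarrow> bool" where
  "filling_step L K \<nu> \<longleftrightarrow> facet K \<nu> \<and> L = K - {\<nu>}"

definition morse_sequence :: "'v set set list \<Rightarrow> 'v set set \<Rightarrow> bool" where
  "morse_sequence Ks K \<longleftrightarrow> Ks \<noteq> [] \<and> hd Ks = {} \<and> last Ks = K \<and>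
     (\<forall>X\<in>set Ks. simplicial_complex X) \<and>
     (\<forall>i < length Ks - 1.
        (\<exists>\<sigma> \<tau>. expansion_step (Ks!i) (Ks!Suc i) \<sigma> \<tau>) \<or>
        (\<exists>\<nu>. filling_step (Ks!i) (Ks!Suc i) \<nu>))"

definition critical :: "'v set set list \<Rightarrow> 'v set set" where
  "critical Ks = {\<nu>. \<exists>i < length Ks - 1. filling_step (Ks!i) (Ks!Suc i) \<nu>}"

definition lower_regular :: "'v set set list \<Rightarrow> 'v set \<Rightarrow> bool" where
  "lower_regular Ks \<sigma> \<longleftrightarrow> (\<exists>i < length Ks - 1. \<exists>\<tau>. expansion_step (Ks!i) (Ks!Suc i) \<sigma> \<tau>)"

definition upper_regular :: "'v set set list \<Rightarrow> 'v set \<Rightarrow> bool" where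
  "upper_regular Ks \<tau> \<longleftrightarrow> (\<exists>i < length Ks - 1. \<exists>\<sigma>. expansion_step (Ks!i) (Ks!Suc i) \<sigma> \<tau>)"

text \<open>p-chains K[p]: subsets of the p-simplices (sum = symmetric difference)\<close>
definition chains :: "'v set set \<Rightarrow> nat \<Rightarrow> 'v set set set" where
  "chains K p = Pow (simplices K p)"

definition crit_chains :: "'v set set list \<Rightarrow> nat \<Rightarrow> 'v set set set" where
  "crit_chains Ks p = {c \<in> chains (last Ks) p. c \<subseteq> critical Ks}"

definition chain_add :: "'a set \<Rightarrow> 'a set \<Rightarrow> 'a set" where
  "chain_add c d = (c - d) \<union> (d - c)"

text \<open>Z2-linear extension of a map from simplices to chains: the sum over Z2 of f(\<sigma>), \<sigma> \<in> c\<close>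
definition lin :: "('a \<Rightarrow> 'b set) \<Rightarrow> 'a set \<Rightarrow> 'b set" where
  "lin f c = {\<kappa>. odd (card {\<sigma>\<in>c. \<kappa> \<in> f \<sigma>})}"

definition boundary :: "'v set set \<Rightarrow> 'v set \<Rightarrow> 'v set set" where
  "boundary K \<sigma> = {\<tau>\<in>K. card \<tau> + 1 = card \<sigma> \<and> \<tau> \<subset> \<sigma>}"

definition coboundary :: "'v set set \<Rightarrow> 'v set \<Rightarrow> 'v set set" where
  "coboundary K \<sigma> = {\<tau>\<in>K. card \<tau> = card \<sigma> + 1 \<and> \<sigma> \<subset> \<tau>}"

text \<open>Values outside K are fixed to 0 (= {}) so that the map is unique as a HOL function.\<close>
definition is_reference :: "'v set set list \<Rightarrow> ('v set \<Rightarrow> 'v set set) \<Rightarrow> bool" where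
  "is_reference Ks f \<longleftrightarrow>
     (\<forall>\<sigma>. \<sigma> \<notin> last Ks \<longrightarrow> f \<sigma> = {}) \<and>
     (\<forall>\<sigma>\<in>last Ks. f \<sigma> \<subseteq> critical Ks \<inter> simplices (last Ks) (card \<sigma> - 1)) \<and>
     (\<forall>\<nu>\<in>critical Ks. f \<nu> = {\<nu>}) \<and>
     (\<forall>\<tau>. upper_regular Ks \<tau> \<longrightarrow> f \<tau> = {} \<and> lin f (boundary (last Ks) \<tau>) = {})"

definition is_coreference :: "'v set set list \<Rightarrow> ('v set \<Rightarrow> 'v set set) \<Rightarrow> bool" where
  "is_coreference Ks f \<longleftrightarrow>
     (\<forall>\<sigma>. \<sigma> \<notin> last Ks \<longrightarrow> f \<sigma> = {}) \<and>
     (\<forall>\<sigma>\<in>last Ks. f \<sigma> \<subseteq> critical Ks \<inter> simplices (last Ks) (card \<sigma> - 1)) \<and>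
     (\<forall>\<nu>\<in>critical Ks. f \<nu> = {\<nu>}) \<and>
     (\<forall>\<sigma>. lower_regular Ks \<sigma> \<longrightarrow> f \<sigma> = {} \<and> lin f (coboundary (last Ks) \<sigma>) = {})"

definition reference :: "'v set set list \<Rightarrow> 'v set \<Rightarrow> 'v set set" where
  "reference Ks = (THE f. is_reference Ks f)"

definition coreference :: "'v set set list \<Rightarrow> 'v set \<Rightarrow> 'v set set" where
  "coreference Ks = (THE f. is_coreference Ks f)"

definition extension :: "'v set set list \<Rightarrow> 'v set \<Rightarrow> 'v set set" where
  "extension Ks \<kappa> = {\<nu>\<in>last Ks. \<kappa> \<in> coreference Ks \<nu>}"

definition coextension :: "'v set set list \<Rightarrow> 'v set \<Rightarrow> 'v set set" where
  "coextension Ks \<kappa> = {\<nu>\<in>last Ks. \<kappa> \<in> reference Ks \<nu>}"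

text \<open>\<open>\<overline>O[p]\<close> and \<open>\<underline>O[p]\<close>: images of the (co)extension maps on \<open>\<widehat>W[p]\<close>\<close>
definition O_upper :: "'v set set list \<Rightarrow> nat \<Rightarrow> 'v set set set" where
  "O_upper Ks p = lin (extension Ks) ` crit_chains Ks p"

definition O_lower :: "'v set set list \<Rightarrow> nat \<Rightarrow> 'v set set set" where
  "O_lower Ks p = lin (coextension Ks) ` crit_chains Ks p"

end

theory Submission
  imports Defs
begin


lemma chain_add_self: "chain_add x x = {}" by (simp add: chain_add_def)
lemma chain_add_eq_empty: "chain_add x y = {} \<longleftrightarrow> x = y" by (auto simp: chain_add_def)
lemma mem_chain_add: "a \<in> chain_add x y \<longleftrightarrow> (a \<in> x) \<noteq> (a \<in> y)" by (auto simp: chain_add_def)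

lemma lin_empty: "lin f {} = {}" by (simp add: lin_def)

lemma lin_insert:
  assumes "finite c" "a \<notin> c"
  shows "lin f (insert a c) = chain_add (f a) (lin f c)"
proof (rule set_eqI)
  fix k
  have "{s\<in>insert a c. k \<in> f s} = (if k \<in> f a then insert a {s\<in>c. k \<in> f s} else {s\<in>c. k \<in> f s})"
    by auto
  then show "k \<in> lin f (insert a c) \<longleftrightarrow> k \<in> chain_add (f a) (lin f c)"
    using assms by (auto simp: lin_def mem_chain_add)
qed

lemma lin_cong: "(\<And>x. x \<in> c \<Longrightarrow> f x = g x) \<Longrightarrow> lin f c = lin g c"
  unfolding lin_def by (metis (mono_tags, lifting) mem_Collect_eq Collect_cong)

lemma lin_subset: "lin f c \<subseteq> \<Union> (f ` c)"
proof
  fix k assume "k \<in> lin f c"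
  then have "odd (card {s\<in>c. k \<in> f s})" by (simp add: lin_def)
  then have "card {s\<in>c. k \<in> f s} \<noteq> 0" by (metis dvd_0_right)
  then have "{s\<in>c. k \<in> f s} \<noteq> {}" by (metis card.empty)
  then obtain s where "s \<in> c" "k \<in> f s" by blast
  then show "k \<in> \<Union> (f ` c)" by blast
qed

lemma lin_add:
  assumes "finite c" "finite d"
  shows "lin f (chain_add c d) = chain_add (lin f c) (lin f d)"
proof (rule set_eqI)
  fix k
  define A where "A = {s\<in>c. k \<in> f s}"
  define B where "B = {s\<in>d. k \<in> f s}"
  have fA: "finite A" "finite B" using assms by (auto simp: A_def B_def)
  have e: "{s\<in>chain_add c d. k \<in> f s} = (A - B) \<union> (B - A)"
    by (auto simp: A_def B_def chain_add_def)
  have 1: "card (A \<union> B) + card (A \<inter> B) = card A + card B" using card_Un_Int[OF fA] by simp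
  have 2: "card (A \<union> B) = card ((A - B) \<union> (B - A)) + card (A \<inter> B)"
  proof -
    have "A \<union> B = ((A - B) \<union> (B - A)) \<union> (A \<inter> B)" by blast
    moreover have "((A - B) \<union> (B - A)) \<inter> (A \<inter> B) = {}" by blast
    ultimately show ?thesis using fA by (simp add: card_Un_disjoint)
  qed
  have "odd (card ((A - B) \<union> (B - A))) \<longleftrightarrow> odd (card A) \<noteq> odd (card B)"
    using 1 2 by presburger
  moreover have "k \<in> lin f (chain_add c d) \<longleftrightarrow> odd (card ((A - B) \<union> (B - A)))"
    unfolding lin_def mem_Collect_eq e ..
  moreover have "k \<in> chain_add (lin f c) (lin f d) \<longleftrightarrow> odd (card A) \<noteq> odd (card B)"
    unfolding mem_chain_add lin_def mem_Collect_eq A_def B_def ..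
  ultimately show "k \<in> lin f (chain_add c d) \<longleftrightarrow> k \<in> chain_add (lin f c) (lin f d)"
    by blast
qed

lemma lin_finite: "finite c \<Longrightarrow> (\<And>s. s \<in> c \<Longrightarrow> finite (g s)) \<Longrightarrow> finite (lin g c)"
  by (meson finite_UN_I finite_subset lin_subset)

lemma lin_lin:
  assumes "finite c" "\<And>s. s \<in> c \<Longrightarrow> finite (g s)"
  shows "lin f (lin g c) = lin (\<lambda>s. lin f (g s)) c"
  using assms
proof (induction c rule: finite_induct)
  case empty then show ?case by (simp add: lin_empty)
next
  case (insert a c)
  have "lin f (lin g (insert a c)) = lin f (chain_add (g a) (lin g c))"
    using insert by (simp add: lin_insert)
  also have "\<dots> = chain_add (lin f (g a)) (lin f (lin g c))"
    using insert by (intro lin_add) (auto intro: lin_finite)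
  also have "\<dots> = lin (\<lambda>s. lin f (g s)) (insert a c)"
    using insert by (simp add: lin_insert)
  finally show ?case .
qed

lemma lin_singleton: "lin (\<lambda>s. {s}) c = c"
proof -
  have "\<And>k. {s\<in>c. k \<in> {s}} = (if k \<in> c then {k} else {})" by auto
  then show ?thesis by (auto simp: lin_def)
qed



lemma sc_closed: "simplicial_complex X \<Longrightarrow> s \<in> X \<Longrightarrow> r \<subseteq> s \<Longrightarrow> r \<noteq> {} \<Longrightarrow> r \<in> X"
  unfolding simplicial_complex_def by blast
lemma sc_ne: "simplicial_complex X \<Longrightarrow> s \<in> X \<Longrightarrow> s \<noteq> {} \<and> finite s"
  unfolding simplicial_complex_def by blast
lemma sc_fin: "simplicial_complex X \<Longrightarrow> finite X"
  by (auto simp: simplicial_complex_def)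

lemma free_card:
  assumes "simplicial_complex X" "free_pair X s t"
  shows "card t = card s + 1"
proof -
  have st: "s \<subset> t" "s \<in> X" "t \<in> X" using assms(2) by (auto simp: free_pair_def)
  then obtain v where v: "v \<in> t" "v \<notin> s" by blast
  have "insert v s \<in> X" by (rule sc_closed[OF assms(1) st(3)]) (use v st in auto)
  then have "insert v s = s \<or> insert v s = t" using assms(2) by (auto simp: free_pair_def)
  then have "t = insert v s" using v by blast
  moreover have "finite s" using sc_ne[OF assms(1) st(2)] by blast
  ultimately show ?thesis using v by simp
qed

lemma exp_new: "expansion_step L X s t \<Longrightarrow> L \<subseteq> X \<and> X - L = {s, t} \<and> s \<subset> t \<and> s \<in> X \<and> t \<in> X"
  by (auto simp: expansion_step_def free_pair_def)
lemma fill_new: "filling_step L X v \<Longrightarrow> L \<subseteq> X \<and> X - L = {v} \<and> v \<in> X"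
  by (auto simp: filling_step_def facet_def)

locale ms =
  fixes Ks :: "'v set set list" and K :: "'v set set"
  assumes ms: "morse_sequence Ks K"
begin

abbreviation "n \<equiv> length Ks - 1"

lemma ne: "Ks \<noteq> []" using ms by (simp add: morse_sequence_def)
lemma K0: "Ks!0 = {}" using ms ne by (simp add: morse_sequence_def hd_conv_nth)
lemma Kn: "Ks!n = K" using ms ne by (simp add: morse_sequence_def last_conv_nth)
lemma lastK: "last Ks = K" using ms by (simp add: morse_sequence_def)
lemma sc: "i \<le> n \<Longrightarrow> simplicial_complex (Ks!i)"
  using ms ne by (simp add: morse_sequence_def) (metis Suc_pred length_greater_0_conv less_Suc_eq_le nth_mem)
lemma scK: "simplicial_complex K" using sc Kn by force
lemma finK: "finite K" using scK sc_fin by blast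
lemma step: "i < n \<Longrightarrow> (\<exists>s t. expansion_step (Ks!i) (Ks!Suc i) s t) \<or> (\<exists>v. filling_step (Ks!i) (Ks!Suc i) v)"
  using ms by (simp add: morse_sequence_def)
lemma step_sub: "i < n \<Longrightarrow> Ks!i \<subseteq> Ks!Suc i"
proof -
  assume "i < n"
  from step[OF this] show ?thesis
  proof (elim disjE exE)
    fix s t assume "expansion_step (Ks!i) (Ks!Suc i) s t"
    from exp_new[OF this] show ?thesis by (elim conjE)
  next
    fix v assume "filling_step (Ks!i) (Ks!Suc i) v"
    from fill_new[OF this] show ?thesis by (elim conjE)
  qed
qed
lemma mono: "i \<le> j \<Longrightarrow> j \<le> n \<Longrightarrow> Ks!i \<subseteq> Ks!j"
proof (induction j)
  case 0 then show ?case by simp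
next
  case (Suc j)
  show ?case
  proof (cases "i = Suc j")
    case False
    then have "Ks!i \<subseteq> Ks!j" using Suc by simp
    then show ?thesis using step_sub[of j] Suc by simp
  qed simp
qed
lemma subK: "i \<le> n \<Longrightarrow> Ks!i \<subseteq> K" using mono[of i n] Kn by simp

lemma add_unique:
  assumes "i < n" "j < n" "x \<in> Ks!Suc i" "x \<notin> Ks!i" "x \<in> Ks!Suc j" "x \<notin> Ks!j"
  shows "i = j"
proof (rule ccontr)
  assume "i \<noteq> j"
  then have "i < j \<or> j < i" by arith
  then show False
  proof
    assume "i < j" then have "Ks!Suc i \<subseteq> Ks!j" using mono assms by simp
    then show False using assms by blast
  next
    assume "j < i" then have "Ks!Suc j \<subseteq> Ks!i" using mono assms by simp
    then show False using assms by blast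
  qed
qed

lemma first_add: "x \<in> Ks!m \<Longrightarrow> m \<le> n \<Longrightarrow> \<exists>i<m. x \<in> Ks!Suc i \<and> x \<notin> Ks!i"
proof (induction m)
  case 0 then show ?case using K0 by simp
next
  case (Suc m)
  show ?case
  proof (cases "x \<in> Ks!m")
    case True then show ?thesis using Suc by (metis Suc_leD less_Suc_eq)
  next
    case False then show ?thesis using Suc by blast
  qed
qed

lemma crit_new: "v \<in> critical Ks \<Longrightarrow> \<exists>i<n. filling_step (Ks!i) (Ks!Suc i) v"
  by (simp add: critical_def)
lemma lower_new: "lower_regular Ks s \<Longrightarrow> \<exists>i<n. \<exists>t. expansion_step (Ks!i) (Ks!Suc i) s t"
  by (simp add: lower_regular_def)
lemma upper_new: "upper_regular Ks t \<Longrightarrow> \<exists>i<n. \<exists>s. expansion_step (Ks!i) (Ks!Suc i) s t"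
  by (simp add: upper_regular_def)

lemma crit_K: "v \<in> critical Ks \<Longrightarrow> v \<in> K"
  using crit_new fill_new subK by (metis Suc_leI subsetD)
lemma lower_K: "lower_regular Ks v \<Longrightarrow> v \<in> K"
  using lower_new exp_new subK by (metis Suc_leI subsetD)
lemma upper_K: "upper_regular Ks v \<Longrightarrow> v \<in> K"
  using upper_new exp_new subK by (metis Suc_leI subsetD)

lemma classify: "v \<in> K \<Longrightarrow> v \<in> critical Ks \<or> lower_regular Ks v \<or> upper_regular Ks v"
proof -
  assume "v \<in> K"
  then obtain i where i: "i < n" "v \<in> Ks!Suc i" "v \<notin> Ks!i" using first_add[of v n] Kn by auto
  from step[OF i(1)] show ?thesis
  proof
    assume "\<exists>s t. expansion_step (Ks!i) (Ks!Suc i) s t"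
    then obtain s t where st: "expansion_step (Ks!i) (Ks!Suc i) s t" by blast
    then have "v = s \<or> v = t" using exp_new[OF st] i by blast
    then show ?thesis using st i(1) by (auto simp: lower_regular_def upper_regular_def)
  next
    assume "\<exists>w. filling_step (Ks!i) (Ks!Suc i) w"
    then obtain w where w: "filling_step (Ks!i) (Ks!Suc i) w" by blast
    then have "v = w" using fill_new[OF w] i by blast
    then show ?thesis using w i(1) by (auto simp: critical_def)
  qed
qed

lemma crit_not_upper: "v \<in> critical Ks \<Longrightarrow> \<not> upper_regular Ks v"
proof
  assume "v \<in> critical Ks" "upper_regular Ks v"
  then obtain i j s where i: "i < n" "filling_step (Ks!i) (Ks!Suc i) v"
    and j: "j < n" "expansion_step (Ks!j) (Ks!Suc j) s v" using crit_new upper_new by meson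
  have fi: "Ks!Suc i - Ks!i = {v}" using fill_new[OF i(2)] by simp
  have ej: "Ks!Suc j - Ks!j = {s, v}" "s \<subset> v" using exp_new[OF j(2)] by simp_all
  have "v \<in> Ks!Suc i - Ks!i" "v \<in> Ks!Suc j - Ks!j" using fi ej by simp_all
  then have "i = j" using add_unique[OF i(1) j(1)] by blast
  then have "{v} = {s, v}" using fi ej by simp
  then have "s = v" by (metis insertI1 singletonD)
  then show False using ej by simp
qed

lemma crit_not_lower: "v \<in> critical Ks \<Longrightarrow> \<not> lower_regular Ks v"
proof
  assume "v \<in> critical Ks" "lower_regular Ks v"
  then obtain i j t where i: "i < n" "filling_step (Ks!i) (Ks!Suc i) v"
    and j: "j < n" "expansion_step (Ks!j) (Ks!Suc j) v t" using crit_new lower_new by meson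
  have fi: "Ks!Suc i - Ks!i = {v}" using fill_new[OF i(2)] by simp
  have ej: "Ks!Suc j - Ks!j = {v, t}" "v \<subset> t" using exp_new[OF j(2)] by simp_all
  have "v \<in> Ks!Suc i - Ks!i" "v \<in> Ks!Suc j - Ks!j" using fi ej by simp_all
  then have "i = j" using add_unique[OF i(1) j(1)] by blast
  then have "{v} = {v, t}" using fi ej by simp
  then have "t = v" by (metis insertI1 insert_commute singletonD)
  then show False using ej by simp
qed

lemma lower_not_upper: "lower_regular Ks v \<Longrightarrow> \<not> upper_regular Ks v"
proof
  assume "lower_regular Ks v" "upper_regular Ks v"
  then obtain i j s t where i: "i < n" "expansion_step (Ks!i) (Ks!Suc i) v t"
    and j: "j < n" "expansion_step (Ks!j) (Ks!Suc j) s v" using lower_new upper_new by meson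
  have ei: "Ks!Suc i - Ks!i = {v, t}" "v \<subset> t" using exp_new[OF i(2)] by simp_all
  have ej: "Ks!Suc j - Ks!j = {s, v}" "s \<subset> v" using exp_new[OF j(2)] by simp_all
  have "v \<in> Ks!Suc i - Ks!i" "v \<in> Ks!Suc j - Ks!j" using ei ej by simp_all
  then have "i = j" using add_unique[OF i(1) j(1)] by blast
  then have "{v, t} = {s, v}" using ei ej by simp
  then have "t = s \<or> t = v" by (metis insertI1 insert_commute insertE singletonD)
  then show False using ei ej by (metis less_irrefl order.strict_trans)
qed

end


context ms begin

lemma bnd_sub: "t \<in> Ks!m \<Longrightarrow> m \<le> n \<Longrightarrow> boundary K t \<subseteq> Ks!m"
proof
  fix r assume "t \<in> Ks!m" "m \<le> n" "r \<in> boundary K t"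
  then have "r \<in> K" "r \<subset> t" by (auto simp: boundary_def)
  then have "r \<noteq> {}" using sc_ne[OF scK] by blast
  then show "r \<in> Ks!m" using sc_closed[OF sc[OF \<open>m \<le> n\<close>] \<open>t \<in> Ks!m\<close>] \<open>r \<subset> t\<close> by blast
qed

lemma cob_avoid: "s \<in> K \<Longrightarrow> s \<notin> Ks!m \<Longrightarrow> m \<le> n \<Longrightarrow> coboundary K s \<inter> Ks!m = {}"
proof (rule ccontr)
  assume a: "s \<in> K" "s \<notin> Ks!m" "m \<le> n" "coboundary K s \<inter> Ks!m \<noteq> {}"
  then obtain r where "r \<in> Ks!m" "s \<subset> r" by (auto simp: coboundary_def)
  moreover have "s \<noteq> {}" using sc_ne[OF scK a(1)] by blast
  ultimately have "s \<in> Ks!m" using sc_closed[OF sc[OF a(3)]] by blast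
  then show False using a by blast
qed

lemma exp_card: "i < n \<Longrightarrow> expansion_step (Ks!i) (Ks!Suc i) s t \<Longrightarrow> card t = card s + 1"
  using free_card[OF sc[of "Suc i"]] by (simp add: expansion_step_def)

lemma exp_bnd:
  assumes "i < n" "expansion_step (Ks!i) (Ks!Suc i) s t"
  shows "s \<in> boundary K t" "boundary K t - {s} \<subseteq> Ks!i"
proof -
  have e: "Ks!i \<subseteq> Ks!Suc i" "Ks!Suc i - Ks!i = {s, t}" "s \<subset> t" "s \<in> Ks!Suc i" "t \<in> Ks!Suc i"
    using exp_new[OF assms(2)] by auto
  have "Ks!Suc i \<subseteq> K" using subK assms(1) by simp
  then show "s \<in> boundary K t" using e exp_card[OF assms] by (auto simp: boundary_def)
  have "boundary K t \<subseteq> Ks!Suc i" using bnd_sub[OF e(5)] assms(1) by simp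
  moreover have "t \<notin> boundary K t" by (auto simp: boundary_def)
  ultimately show "boundary K t - {s} \<subseteq> Ks!i" using e by blast
qed

lemma exp_cob:
  assumes "i < n" "expansion_step (Ks!i) (Ks!Suc i) s t"
  shows "t \<in> coboundary K s" "coboundary K s - {t} \<subseteq> K - Ks!Suc i"
proof -
  have e: "s \<subset> t" "t \<in> Ks!Suc i" and fp: "free_pair (Ks!Suc i) s t"
    using exp_new[OF assms(2)] assms(2) by (auto simp: expansion_step_def)
  have "Ks!Suc i \<subseteq> K" using subK assms(1) by simp
  then show "t \<in> coboundary K s" using e exp_card[OF assms] by (auto simp: coboundary_def)
  show "coboundary K s - {t} \<subseteq> K - Ks!Suc i"
  proof
    fix r assume r: "r \<in> coboundary K s - {t}"
    then have "r \<in> K" "s \<subset> r" "r \<noteq> t" by (auto simp: coboundary_def)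
    moreover have "r \<notin> Ks!Suc i" using fp calculation by (auto simp: free_pair_def)
    ultimately show "r \<in> K - Ks!Suc i" by blast
  qed
qed

lemma fin_sub: "B \<subseteq> K \<Longrightarrow> finite B" using finK finite_subset by blast

lemma ref_unique:
  assumes f: "is_reference Ks f" and g: "is_reference Ks g"
  shows "f = g"
proof -
  have F1: "\<forall>x. x \<notin> K \<longrightarrow> f x = {}" "\<forall>x. x \<notin> K \<longrightarrow> g x = {}"
    using conjunct1[OF f[unfolded is_reference_def lastK]] conjunct1[OF g[unfolded is_reference_def lastK]] by this+
  have F3: "\<forall>x\<in>critical Ks. f x = {x}" "\<forall>x\<in>critical Ks. g x = {x}"
    using conjunct1[OF conjunct2[OF conjunct2[OF f[unfolded is_reference_def lastK]]]] conjunct1[OF conjunct2[OF conjunct2[OF g[unfolded is_reference_def lastK]]]] by this+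
  have F4: "\<forall>t. upper_regular Ks t \<longrightarrow> f t = {} \<and> lin f (boundary K t) = {}"
     "\<forall>t. upper_regular Ks t \<longrightarrow> g t = {} \<and> lin g (boundary K t) = {}"
    using conjunct2[OF conjunct2[OF conjunct2[OF f[unfolded is_reference_def lastK]]]] conjunct2[OF conjunct2[OF conjunct2[OF g[unfolded is_reference_def lastK]]]] by this+
  have "m \<le> n \<Longrightarrow> \<forall>x\<in>Ks!m. f x = g x" for m
  proof (induction m)
    case 0 show ?case using K0 by simp
  next
    case (Suc m)
    then have IH: "\<forall>x\<in>Ks!m. f x = g x" and mn: "m < n" by auto
    show ?case
    proof
      fix x assume x: "x \<in> Ks!Suc m"
      show "f x = g x"
      proof (cases "x \<in> Ks!m")
        case True with IH show ?thesis by blast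
      next
        case False
        from step[OF mn] show ?thesis
        proof
          assume "\<exists>s t. expansion_step (Ks!m) (Ks!Suc m) s t"
          then obtain s t where st: "expansion_step (Ks!m) (Ks!Suc m) s t" by blast
          have up: "upper_regular Ks t" using st mn by (auto simp: upper_regular_def)
          have "x = s \<or> x = t" using exp_new[OF st] x False by blast
          then show ?thesis
          proof
            assume "x = t"
            then show ?thesis using F4 up by simp
          next
            assume xs: "x = s"
            define B where "B = boundary K t - {s}"
            have sB: "s \<in> boundary K t" "B \<subseteq> Ks!m" using exp_bnd[OF mn st] B_def by auto
            have bi: "boundary K t = insert s B" "s \<notin> B" using sB B_def by auto
            have fB: "finite B" using sB subK mn fin_sub by (meson less_imp_le_nat order_trans)
            have "lin f (boundary K t) = {}" "lin g (boundary K t) = {}"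
              using F4 up by simp_all
            then have "f s = lin f B" "g s = lin g B"
              using fB bi by (simp_all add: lin_insert chain_add_eq_empty)
            moreover have "lin f B = lin g B" using IH sB by (intro lin_cong) blast
            ultimately show ?thesis using xs by simp
          qed
        next
          assume "\<exists>v. filling_step (Ks!m) (Ks!Suc m) v"
          then obtain v where v: "filling_step (Ks!m) (Ks!Suc m) v" by blast
          have "x = v" using fill_new[OF v] x False by blast
          moreover have "v \<in> critical Ks" using v mn by (auto simp: critical_def)
          ultimately show ?thesis using F3 by simp
        qed
      qed
    qed
  qed
  then have "\<forall>x\<in>K. f x = g x" using Kn by (metis order_refl)
  moreover have "\<forall>x. x \<notin> K \<longrightarrow> f x = g x" using F1 by simp
  ultimately show "f = g" by blast
qed

lemma coref_unique:
  assumes f: "is_coreference Ks f" and g: "is_coreference Ks g"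
  shows "f = g"
proof -
  have F1: "\<forall>x. x \<notin> K \<longrightarrow> f x = {}" "\<forall>x. x \<notin> K \<longrightarrow> g x = {}"
    using conjunct1[OF f[unfolded is_coreference_def lastK]] conjunct1[OF g[unfolded is_coreference_def lastK]] by this+
  have F3: "\<forall>x\<in>critical Ks. f x = {x}" "\<forall>x\<in>critical Ks. g x = {x}"
    using conjunct1[OF conjunct2[OF conjunct2[OF f[unfolded is_coreference_def lastK]]]] conjunct1[OF conjunct2[OF conjunct2[OF g[unfolded is_coreference_def lastK]]]] by this+
  have F4: "\<forall>t. lower_regular Ks t \<longrightarrow> f t = {} \<and> lin f (coboundary K t) = {}"
     "\<forall>t. lower_regular Ks t \<longrightarrow> g t = {} \<and> lin g (coboundary K t) = {}"
    using conjunct2[OF conjunct2[OF conjunct2[OF f[unfolded is_coreference_def lastK]]]] conjunct2[OF conjunct2[OF conjunct2[OF g[unfolded is_coreference_def lastK]]]] by this+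
  have "m \<le> n \<Longrightarrow> \<forall>x\<in>K - Ks!m. f x = g x" for m
  proof (induction m rule: inc_induct)
    case base show ?case using Kn by simp
  next
    case (step m)
    then have IH: "\<forall>x\<in>K - Ks!Suc m. f x = g x" and mn: "m < n" by auto
    show ?case
    proof
      fix x assume x: "x \<in> K - Ks!m"
      show "f x = g x"
      proof (cases "x \<in> Ks!Suc m")
        case False with IH x show ?thesis by blast
      next
        case True
        from ms.step[OF ms_axioms mn] show ?thesis
        proof
          assume "\<exists>s t. expansion_step (Ks!m) (Ks!Suc m) s t"
          then obtain s t where st: "expansion_step (Ks!m) (Ks!Suc m) s t" by blast
          have lo: "lower_regular Ks s" using st mn by (auto simp: lower_regular_def)
          have "x = s \<or> x = t" using exp_new[OF st] x True by blast
          then show ?thesis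
          proof
            assume "x = s"
            then show ?thesis using F4 lo by simp
          next
            assume xt: "x = t"
            define B where "B = coboundary K s - {t}"
            have sB: "t \<in> coboundary K s" "B \<subseteq> K - Ks!Suc m" using exp_cob[OF mn st] B_def by auto
            have bi: "coboundary K s = insert t B" "t \<notin> B" using sB B_def by auto
            have fB: "finite B" using sB fin_sub by blast
            have "lin f (coboundary K s) = {}" "lin g (coboundary K s) = {}"
              using F4 lo by simp_all
            then have "f t = lin f B" "g t = lin g B"
              using fB bi by (simp_all add: lin_insert chain_add_eq_empty)
            moreover have "lin f B = lin g B" using IH sB by (intro lin_cong) blast
            ultimately show ?thesis using xt by simp
          qed
        next
          assume "\<exists>v. filling_step (Ks!m) (Ks!Suc m) v"
          then obtain v where v: "filling_step (Ks!m) (Ks!Suc m) v" by blast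
          have "x = v" using fill_new[OF v] x True by blast
          moreover have "v \<in> critical Ks" using v mn by (auto simp: critical_def)
          ultimately show ?thesis using F3 by simp
        qed
      qed
    qed
  qed
  then have "\<forall>x\<in>K. f x = g x" using K0 by force
  moreover have "\<forall>x. x \<notin> K \<longrightarrow> f x = g x" using F1 by simp
  ultimately show "f = g" by blast
qed

end


context ms begin

definition Rinv :: "nat \<Rightarrow> ('v set \<Rightarrow> 'v set set) \<Rightarrow> bool" where
  "Rinv m f \<longleftrightarrow> (\<forall>x. x \<notin> Ks!m \<longrightarrow> f x = {}) \<and>
     (\<forall>x\<in>K. f x \<subseteq> critical Ks \<inter> simplices K (card x - 1)) \<and>
     (\<forall>x\<in>critical Ks. x \<in> Ks!m \<longrightarrow> f x = {x}) \<and>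
     (\<forall>t. upper_regular Ks t \<and> t \<in> Ks!m \<longrightarrow> f t = {} \<and> lin f (boundary K t) = {})"

lemma crit_dim: "v \<in> critical Ks \<Longrightarrow> {v} \<subseteq> critical Ks \<inter> simplices K (card v - 1)"
proof -
  assume v: "v \<in> critical Ks"
  then have "v \<in> K" by (rule crit_K)
  then have "v \<noteq> {}" "finite v" using sc_ne[OF scK] by auto
  then have "card v = Suc (card v - 1)" by (simp add: card_gt_0_iff)
  then show ?thesis using v \<open>v \<in> K\<close> by (simp add: simplices_def)
qed

lemma lin_dim:
  assumes "\<forall>x\<in>K. f x \<subseteq> critical Ks \<inter> simplices K (card x - 1)" "B \<subseteq> K" "\<forall>r\<in>B. card r = c"
  shows "lin f B \<subseteq> critical Ks \<inter> simplices K (c - 1)"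
proof
  fix k assume "k \<in> lin f B"
  then obtain r where r: "r \<in> B" "k \<in> f r" using lin_subset[of f B] by blast
  then have "r \<in> K" "card r = c" using assms by auto
  then show "k \<in> critical Ks \<inter> simplices K (c - 1)" using assms(1) r by blast
qed

lemma ref_exists_aux: "m \<le> n \<Longrightarrow> \<exists>f. Rinv m f"
proof (induction m)
  case 0
  have "Rinv 0 (\<lambda>_. {})" using K0 by (simp add: Rinv_def lin_def)
  then show ?case by blast
next
  case (Suc m)
  then have mn: "m < n" by simp
  then obtain f where f: "Rinv m f" using Suc by auto
  have f1: "\<forall>x. x \<notin> Ks!m \<longrightarrow> f x = {}" and f2: "\<forall>x\<in>K. f x \<subseteq> critical Ks \<inter> simplices K (card x - 1)"
    and f3: "\<forall>x\<in>critical Ks. x \<in> Ks!m \<longrightarrow> f x = {x}"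
    and f4: "\<forall>t. upper_regular Ks t \<and> t \<in> Ks!m \<longrightarrow> f t = {} \<and> lin f (boundary K t) = {}"
    using f by (auto simp: Rinv_def)
  have mle: "m \<le> n" "Suc m \<le> n" using mn by auto
  from step[OF mn] show ?case
  proof
    assume "\<exists>s t. expansion_step (Ks!m) (Ks!Suc m) s t"
    then obtain s t where st: "expansion_step (Ks!m) (Ks!Suc m) s t" by blast
    have e: "Ks!m \<subseteq> Ks!Suc m" "Ks!Suc m - Ks!m = {s, t}" "s \<subset> t" "s \<in> Ks!Suc m" "t \<in> Ks!Suc m"
      using exp_new[OF st] by auto
    have lo: "lower_regular Ks s" using st mn by (auto simp: lower_regular_def)
    have up: "upper_regular Ks t" using st mn by (auto simp: upper_regular_def)
    define B where "B = boundary K t - {s}"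
    have sB: "s \<in> boundary K t" "B \<subseteq> Ks!m" using exp_bnd[OF mn st] B_def by auto
    have bi: "boundary K t = insert s B" "s \<notin> B" using sB B_def by auto
    have BK: "B \<subseteq> K" using sB subK[OF mle(1)] by blast
    have fB: "finite B" using BK fin_sub by blast
    have snm: "s \<notin> Ks!m" "t \<notin> Ks!m" "s \<noteq> t" using e by auto
    define g where "g = f(s := lin f B, t := {})"
    have gB: "\<forall>r\<in>B. g r = f r" using sB snm g_def by auto
    have cB: "\<forall>r\<in>B. card r = card s"
      using exp_card[OF mn st] by (auto simp: B_def boundary_def)
    have "Rinv (Suc m) g"
      unfolding Rinv_def
    proof (intro conjI allI ballI impI)
      fix x assume "x \<notin> Ks!Suc m" then show "g x = {}" using e f1 g_def by auto
    next
      fix x assume x: "x \<in> K"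
      have "lin f B \<subseteq> critical Ks \<inter> simplices K (card s - 1)"
        using lin_dim[OF f2 BK cB] .
      then show "g x \<subseteq> critical Ks \<inter> simplices K (card x - 1)"
        using f2 x g_def by auto
    next
      fix x assume x: "x \<in> critical Ks" "x \<in> Ks!Suc m"
      have "x \<noteq> s" using crit_not_lower x lo by blast
      moreover have "x \<noteq> t" using crit_not_upper x up by blast
      ultimately show "g x = {x}" using x e f3 g_def by auto
    next
      fix x assume x: "upper_regular Ks x \<and> x \<in> Ks!Suc m"
      have xs: "x \<noteq> s" using lower_not_upper x lo by blast
      show "g x = {}"
      proof (cases "x = t")
        case False then have "x \<in> Ks!m" using x xs e by blast
        then show ?thesis using f4 x g_def xs False by auto
      qed (simp add: g_def)
      show "lin g (boundary K x) = {}"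
      proof (cases "x = t")
        case True
        have "lin g (boundary K t) = chain_add (g s) (lin g B)" using bi fB by (simp add: lin_insert)
        also have "lin g B = lin f B" using gB by (intro lin_cong) auto
        also have "g s = lin f B" using snm g_def by simp
        finally show ?thesis using True by (simp add: chain_add_self)
      next
        case False then have xm: "x \<in> Ks!m" using x xs e by blast
        have "boundary K x \<subseteq> Ks!m" using bnd_sub[OF xm mle(1)] .
        then have "lin g (boundary K x) = lin f (boundary K x)"
          using snm g_def by (intro lin_cong) auto
        then show ?thesis using f4 x xm by auto
      qed
    qed
    then show ?thesis by blast
  next
    assume "\<exists>v. filling_step (Ks!m) (Ks!Suc m) v"
    then obtain v where v: "filling_step (Ks!m) (Ks!Suc m) v" by blast
    have e: "Ks!m \<subseteq> Ks!Suc m" "Ks!Suc m - Ks!m = {v}" "v \<in> Ks!Suc m" using fill_new[OF v] by auto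
    have cv: "v \<in> critical Ks" using v mn by (auto simp: critical_def)
    have vm: "v \<notin> Ks!m" using e by blast
    define g where "g = f(v := {v})"
    have "Rinv (Suc m) g"
      unfolding Rinv_def
    proof (intro conjI allI ballI impI)
      fix x assume "x \<notin> Ks!Suc m" then show "g x = {}" using e f1 g_def by auto
    next
      fix x assume x: "x \<in> K"
      then show "g x \<subseteq> critical Ks \<inter> simplices K (card x - 1)"
        using f2 crit_dim[OF cv] g_def by auto
    next
      fix x assume x: "x \<in> critical Ks" "x \<in> Ks!Suc m"
      then show "g x = {x}" using e f3 g_def by auto
    next
      fix x assume x: "upper_regular Ks x \<and> x \<in> Ks!Suc m"
      have xv: "x \<noteq> v" using crit_not_upper x cv by blast
      then have xm: "x \<in> Ks!m" using x e by blast
      show "g x = {}" using f4 x xm xv g_def by auto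
      have "boundary K x \<subseteq> Ks!m" using bnd_sub[OF xm mle(1)] .
      then have "lin g (boundary K x) = lin f (boundary K x)"
        using vm g_def by (intro lin_cong) auto
      then show "lin g (boundary K x) = {}" using f4 x xm by auto
    qed
    then show ?thesis by blast
  qed
qed

lemma ref_is: "is_reference Ks (reference Ks)"
proof -
  obtain f where "Rinv n f" using ref_exists_aux by blast
  then have r1: "\<forall>x. x \<notin> K \<longrightarrow> f x = {}" and r2: "\<forall>x\<in>K. f x \<subseteq> critical Ks \<inter> simplices K (card x - 1)"
    and r3: "\<forall>x\<in>critical Ks. x \<in> K \<longrightarrow> f x = {x}"
    and r4: "\<forall>t. upper_regular Ks t \<and> t \<in> K \<longrightarrow> f t = {} \<and> lin f (boundary K t) = {}"
    unfolding Rinv_def Kn by auto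
  have "is_reference Ks f" unfolding is_reference_def lastK
  proof (intro conjI)
    show "\<forall>x\<in>critical Ks. f x = {x}" using r3 crit_K by blast
    show "\<forall>t. upper_regular Ks t \<longrightarrow> f t = {} \<and> lin f (boundary K t) = {}"
      using r4 upper_K by blast
  qed (use r1 r2 in auto)
  then have "\<exists>!f. is_reference Ks f" using ref_unique by blast
  then show ?thesis unfolding reference_def by (rule theI')
qed

end


context ms begin

definition Cinv :: "nat \<Rightarrow> ('v set \<Rightarrow> 'v set set) \<Rightarrow> bool" where
  "Cinv m f \<longleftrightarrow> (\<forall>x. x \<notin> K - Ks!m \<longrightarrow> f x = {}) \<and>
     (\<forall>x\<in>K. f x \<subseteq> critical Ks \<inter> simplices K (card x - 1)) \<and>
     (\<forall>x\<in>critical Ks. x \<notin> Ks!m \<longrightarrow> f x = {x}) \<and>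
     (\<forall>s. lower_regular Ks s \<and> s \<notin> Ks!m \<longrightarrow> f s = {} \<and> lin f (coboundary K s) = {})"

lemma coref_exists_aux: "m \<le> n \<Longrightarrow> \<exists>f. Cinv m f"
proof (induction m rule: inc_induct)
  case base
  have "Cinv n (\<lambda>_. {})" using Kn crit_K lower_K by (auto simp: Cinv_def)
  then show ?case by blast
next
  case (step m)
  then have mn: "m < n" by simp
  then obtain f where f: "Cinv (Suc m) f" using step by auto
  have f1: "\<forall>x. x \<notin> K - Ks!Suc m \<longrightarrow> f x = {}" and f2: "\<forall>x\<in>K. f x \<subseteq> critical Ks \<inter> simplices K (card x - 1)"
    and f3: "\<forall>x\<in>critical Ks. x \<notin> Ks!Suc m \<longrightarrow> f x = {x}"
    and f4: "\<forall>s. lower_regular Ks s \<and> s \<notin> Ks!Suc m \<longrightarrow> f s = {} \<and> lin f (coboundary K s) = {}"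
    using f unfolding Cinv_def by auto
  have mle: "m \<le> n" "Suc m \<le> n" using mn by auto
  have sK: "Ks!Suc m \<subseteq> K" using subK[OF mle(2)] .
  from ms.step[OF ms_axioms mn] show ?case
  proof
    assume "\<exists>s t. expansion_step (Ks!m) (Ks!Suc m) s t"
    then obtain s t where st: "expansion_step (Ks!m) (Ks!Suc m) s t" by blast
    have e: "Ks!m \<subseteq> Ks!Suc m" "Ks!Suc m - Ks!m = {s, t}" "s \<subset> t" "s \<in> Ks!Suc m" "t \<in> Ks!Suc m"
      using exp_new[OF st] by auto
    have lo: "lower_regular Ks s" using st mn by (auto simp: lower_regular_def)
    have up: "upper_regular Ks t" using st mn by (auto simp: upper_regular_def)
    define B where "B = coboundary K s - {t}"
    have sB: "t \<in> coboundary K s" "B \<subseteq> K - Ks!Suc m" using exp_cob[OF mn st] B_def by auto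
    have bi: "coboundary K s = insert t B" "t \<notin> B" using sB B_def by auto
    have BK: "B \<subseteq> K" using sB by blast
    have fB: "finite B" using BK fin_sub by blast
    have snm: "s \<notin> Ks!m" "t \<notin> Ks!m" "s \<noteq> t" using e by auto
    define g where "g = f(t := lin f B, s := {})"
    have gB: "\<forall>r\<in>B. g r = f r" using sB e g_def by auto
    have cB: "\<forall>r\<in>B. card r = card t"
      using exp_card[OF mn st] by (auto simp: B_def coboundary_def)
    have "Cinv m g"
      unfolding Cinv_def
    proof (intro conjI allI ballI impI)
      fix x assume "x \<notin> K - Ks!m" then show "g x = {}" using e sK f1 g_def by auto
    next
      fix x assume x: "x \<in> K"
      have "lin f B \<subseteq> critical Ks \<inter> simplices K (card t - 1)"
        using lin_dim[OF f2 BK cB] .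
      then show "g x \<subseteq> critical Ks \<inter> simplices K (card x - 1)"
        using f2 x g_def by auto
    next
      fix x assume x: "x \<in> critical Ks" "x \<notin> Ks!m"
      have "x \<noteq> s" using crit_not_lower x lo by blast
      moreover have "x \<noteq> t" using crit_not_upper x up by blast
      ultimately show "g x = {x}" using x e f3 g_def by auto
    next
      fix x assume x: "lower_regular Ks x \<and> x \<notin> Ks!m"
      have xt: "x \<noteq> t" using lower_not_upper x up by blast
      show "g x = {}"
      proof (cases "x = s")
        case False then have "x \<notin> Ks!Suc m" using x xt e by blast
        then show ?thesis using f4 x g_def xt False by auto
      qed (simp add: g_def)
      show "lin g (coboundary K x) = {}"
      proof (cases "x = s")
        case True
        have "lin g (coboundary K s) = chain_add (g t) (lin g B)" using bi fB by (simp add: lin_insert)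
        also have "lin g B = lin f B" using gB by (intro lin_cong) auto
        also have "g t = lin f B" using snm g_def by simp
        finally show ?thesis using True by (simp add: chain_add_self)
      next
        case False then have xm: "x \<notin> Ks!Suc m" using x xt e by blast
        have "coboundary K x \<inter> Ks!Suc m = {}" using cob_avoid[OF lower_K xm mle(2)] x by blast
        then have "lin g (coboundary K x) = lin f (coboundary K x)"
          using e g_def by (intro lin_cong) auto
        then show ?thesis using f4 x xm by auto
      qed
    qed
    then show ?thesis by blast
  next
    assume "\<exists>v. filling_step (Ks!m) (Ks!Suc m) v"
    then obtain v where v: "filling_step (Ks!m) (Ks!Suc m) v" by blast
    have e: "Ks!m \<subseteq> Ks!Suc m" "Ks!Suc m - Ks!m = {v}" "v \<in> Ks!Suc m" using fill_new[OF v] by auto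
    have cv: "v \<in> critical Ks" using v mn by (auto simp: critical_def)
    define g where "g = f(v := {v})"
    have "Cinv m g"
      unfolding Cinv_def
    proof (intro conjI allI ballI impI)
      fix x assume "x \<notin> K - Ks!m" then show "g x = {}" using e sK f1 g_def by auto
    next
      fix x assume x: "x \<in> K"
      then show "g x \<subseteq> critical Ks \<inter> simplices K (card x - 1)"
        using f2 crit_dim[OF cv] g_def by auto
    next
      fix x assume x: "x \<in> critical Ks" "x \<notin> Ks!m"
      then show "g x = {x}" using e f3 g_def by auto
    next
      fix x assume x: "lower_regular Ks x \<and> x \<notin> Ks!m"
      have xv: "x \<noteq> v" using crit_not_lower x cv by blast
      then have xm: "x \<notin> Ks!Suc m" using x e by blast
      show "g x = {}" using f4 x xm xv g_def by auto
      have "coboundary K x \<inter> Ks!Suc m = {}" using cob_avoid[OF lower_K xm mle(2)] x by blast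
      then have "lin g (coboundary K x) = lin f (coboundary K x)"
        using e g_def by (intro lin_cong) auto
      then show "lin g (coboundary K x) = {}" using f4 x xm by auto
    qed
    then show ?thesis by blast
  qed
qed

lemma coref_is: "is_coreference Ks (coreference Ks)"
proof -
  obtain f where "Cinv 0 f" using coref_exists_aux by blast
  then have r1: "\<forall>x. x \<notin> K \<longrightarrow> f x = {}" and r2: "\<forall>x\<in>K. f x \<subseteq> critical Ks \<inter> simplices K (card x - 1)"
    and r3: "\<forall>x\<in>critical Ks. f x = {x}"
    and r4: "\<forall>s. lower_regular Ks s \<longrightarrow> f s = {} \<and> lin f (coboundary K s) = {}"
    unfolding Cinv_def K0 by auto
  have "is_coreference Ks f" unfolding is_coreference_def lastK
    using r1 r2 r3 r4 by (intro conjI)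
  then have "\<exists>!f. is_coreference Ks f" using coref_unique by blast
  then show ?thesis unfolding coreference_def by (rule theI')
qed

end


context ms begin

lemma ext_ref:
  assumes k: "k \<in> critical Ks"
  shows "lin (reference Ks) (extension Ks k) = {k}"
proof -
  have R: "is_reference Ks (reference Ks)" by (rule ref_is)
  have C: "is_coreference Ks (coreference Ks)" by (rule coref_is)
  have "{v \<in> extension Ks k. k' \<in> reference Ks v} = (if k' = k then {k} else {})" for k'
  proof -
    have "v = k \<and> k' = k" if v: "v \<in> extension Ks k" "k' \<in> reference Ks v" for v
    proof -
      have vK: "v \<in> K" and kv: "k \<in> coreference Ks v" using v lastK by (auto simp: extension_def)
      from classify[OF vK] show ?thesis
      proof (elim disjE)
        assume "v \<in> critical Ks"
        then show ?thesis using R C kv v(2) by (simp add: is_reference_def is_coreference_def)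
      next
        assume "lower_regular Ks v" then show ?thesis using C kv by (simp add: is_coreference_def)
      next
        assume "upper_regular Ks v" then show ?thesis using R v(2) by (simp add: is_reference_def)
      qed
    qed
    moreover have "k \<in> extension Ks k" "k \<in> reference Ks k"
      using R C k crit_K[OF k] lastK by (auto simp: extension_def is_reference_def is_coreference_def)
    ultimately show ?thesis by auto
  qed
  then show ?thesis by (auto simp: lin_def)
qed

lemma coext_coref:
  assumes k: "k \<in> critical Ks"
  shows "lin (coreference Ks) (coextension Ks k) = {k}"
proof -
  have R: "is_reference Ks (reference Ks)" by (rule ref_is)
  have C: "is_coreference Ks (coreference Ks)" by (rule coref_is)
  have "{v \<in> coextension Ks k. k' \<in> coreference Ks v} = (if k' = k then {k} else {})" for k'
  proof -
    have "v = k \<and> k' = k" if v: "v \<in> coextension Ks k" "k' \<in> coreference Ks v" for v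
    proof -
      have vK: "v \<in> K" and kv: "k \<in> reference Ks v" using v lastK by (auto simp: coextension_def)
      from classify[OF vK] show ?thesis
      proof (elim disjE)
        assume "v \<in> critical Ks"
        then show ?thesis using R C kv v(2) by (simp add: is_reference_def is_coreference_def)
      next
        assume "lower_regular Ks v" then show ?thesis using C v(2) by (simp add: is_coreference_def)
      next
        assume "upper_regular Ks v" then show ?thesis using R kv by (simp add: is_reference_def)
      qed
    qed
    moreover have "k \<in> coextension Ks k" "k \<in> coreference Ks k"
      using R C k crit_K[OF k] lastK by (auto simp: coextension_def is_reference_def is_coreference_def)
    ultimately show ?thesis by auto
  qed
  then show ?thesis by (auto simp: lin_def)
qed

lemma cc: "c \<in> crit_chains Ks p \<Longrightarrow> finite c \<and> c \<subseteq> critical Ks"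
  using fin_sub lastK by (auto simp: crit_chains_def chains_def simplices_def)

lemma fin_ext: "finite (extension Ks k)" "finite (coextension Ks k)"
  using fin_sub lastK by (auto simp: extension_def coextension_def)

lemma left_inv1: "c \<in> crit_chains Ks p \<Longrightarrow> lin (reference Ks) (lin (extension Ks) c) = c"
proof -
  assume c: "c \<in> crit_chains Ks p"
  have "lin (reference Ks) (lin (extension Ks) c) = lin (\<lambda>k. lin (reference Ks) (extension Ks k)) c"
    using cc[OF c] fin_ext by (intro lin_lin) auto
  also have "\<dots> = lin (\<lambda>k. {k}) c" using cc[OF c] ext_ref by (intro lin_cong) auto
  finally show ?thesis by (simp add: lin_singleton)
qed

lemma left_inv2: "c \<in> crit_chains Ks p \<Longrightarrow> lin (coreference Ks) (lin (coextension Ks) c) = c"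
proof -
  assume c: "c \<in> crit_chains Ks p"
  have "lin (coreference Ks) (lin (coextension Ks) c) = lin (\<lambda>k. lin (coreference Ks) (coextension Ks k)) c"
    using cc[OF c] fin_ext by (intro lin_lin) auto
  also have "\<dots> = lin (\<lambda>k. {k}) c" using cc[OF c] coext_coref by (intro lin_cong) auto
  finally show ?thesis by (simp add: lin_singleton)
qed

end

theorem proposition19:
  fixes Ks :: "'v set set list" and K :: "'v set set" and p :: nat
  assumes "morse_sequence Ks K"
  shows "(bij_betw (lin (extension Ks)) (crit_chains Ks p) (O_upper Ks p) \<and>
          (\<forall>c\<in>crit_chains Ks p. \<forall>d\<in>crit_chains Ks p.
             lin (extension Ks) (chain_add c d) = chain_add (lin (extension Ks) c) (lin (extension Ks) d)) \<and>
          (\<forall>c\<in>crit_chains Ks p. lin (reference Ks) (lin (extension Ks) c) = c) \<and>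
          (\<forall>d\<in>O_upper Ks p. lin (extension Ks) (lin (reference Ks) d) = d))
       \<and> (bij_betw (lin (coextension Ks)) (crit_chains Ks p) (O_lower Ks p) \<and>
          (\<forall>c\<in>crit_chains Ks p. \<forall>d\<in>crit_chains Ks p.
             lin (coextension Ks) (chain_add c d) = chain_add (lin (coextension Ks) c) (lin (coextension Ks) d)) \<and>
          (\<forall>c\<in>crit_chains Ks p. lin (coreference Ks) (lin (coextension Ks) c) = c) \<and>
          (\<forall>d\<in>O_lower Ks p. lin (coextension Ks) (lin (coreference Ks) d) = d))"
proof -
  interpret ms Ks K using assms by unfold_locales
  have L1: "\<forall>c\<in>crit_chains Ks p. lin (reference Ks) (lin (extension Ks) c) = c" using left_inv1 by blast
  have L2: "\<forall>c\<in>crit_chains Ks p. lin (coreference Ks) (lin (coextension Ks) c) = c" using left_inv2 by blast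
  have B1: "bij_betw (lin (extension Ks)) (crit_chains Ks p) (O_upper Ks p)"
    unfolding bij_betw_def O_upper_def using L1 by (metis inj_on_inverseI)
  have B2: "bij_betw (lin (coextension Ks)) (crit_chains Ks p) (O_lower Ks p)"
    unfolding bij_betw_def O_lower_def using L2 by (metis inj_on_inverseI)
  have A1: "\<forall>c\<in>crit_chains Ks p. \<forall>d\<in>crit_chains Ks p.
             lin (extension Ks) (chain_add c d) = chain_add (lin (extension Ks) c) (lin (extension Ks) d)"
  proof (intro ballI)
    fix c d assume "c \<in> crit_chains Ks p" "d \<in> crit_chains Ks p"
    then have "finite c" "finite d" using cc by auto
    then show "lin (extension Ks) (chain_add c d) = chain_add (lin (extension Ks) c) (lin (extension Ks) d)"
      by (rule lin_add)
  qed
  have A2: "\<forall>c\<in>crit_chains Ks p. \<forall>d\<in>crit_chains Ks p.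
             lin (coextension Ks) (chain_add c d) = chain_add (lin (coextension Ks) c) (lin (coextension Ks) d)"
  proof (intro ballI)
    fix c d assume "c \<in> crit_chains Ks p" "d \<in> crit_chains Ks p"
    then have "finite c" "finite d" using cc by auto
    then show "lin (coextension Ks) (chain_add c d) = chain_add (lin (coextension Ks) c) (lin (coextension Ks) d)"
      by (rule lin_add)
  qed
  have R1: "\<forall>d\<in>O_upper Ks p. lin (extension Ks) (lin (reference Ks) d) = d"
    unfolding O_upper_def using L1 by auto
  have R2: "\<forall>d\<in>O_lower Ks p. lin (coextension Ks) (lin (coreference Ks) d) = d"
    unfolding O_lower_def using L2 by auto
  show ?thesis using B1 B2 A1 A2 L1 L2 R1 R2 by (intro conjI)
qed


end
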